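(* Let $P=(U,R)$ be a partial order with $U=\{u_1,\dots,u_n\}$, let $V=\{v_1,\dots,v_n\}$, and let $E_0=\{u_iv_i: 1\le i\le n\}$. The following are equivalent: (a) $P=P_1\cap P_2$ for some linear order $P_1$ and some interval order $P_2$ on $U$; (b) there exist two partial orders $P_1,P_2$ on $U$ such that $\widehat{C}(P)=\widehat{NC}(P_1)\cup\widehat{C}(P_2)$ and both $\widehat{NC}(P_1)$ and $\widehat{C}(P_2)$ are chain graphs; (c) $\widehat{C}(P)$ is linear-interval coverable, i.e. $\widehat{C}(P)=G_1\cup G_2$ for two chain graphs $G_1=(U,V,E_1)$ and $G_2=(U,V,E_2)$ with $E_0\subseteq E_2\setminus E_1$.
   Context: For a partial order $Q$ on $U=\{u_1,\dots,u_n\}$ and a disjoint copy $V=\{v_1,\dots,v_n\}$: the domination bipartite graph $C(Q)=(U,V,E)$ has $u_iv_j\in E$ iff $u_i<_Q u_j$; the bipartite graph $NC(Q)=(U,V,E')$ has $u_iv_j\in E'$ iff $u_i\le_Q u_j$ (i.e. $u_i<_Q u_j$ or $i=j$). For a bipartite graph $B=(U,V,F)$, its bipartite complement is $\widehat{B}=(U,V,\widehat F)$ where, for $u\in U,v\in V$, $uv\in\widehat F$ iff $uv\notin F$. For graphs on the same vertex set, $G_1\cup G_2$ denotes the graph with the union of the edge sets. A bipartite graph $(U,V,F)$ is a chain graph if for any two vertices in the same color class one neighborhood contains the other. A linear order is a partial order in which any two distinct elements are comparable; an interval order is a partial order whose elements can be assigned real intervals $I_x$ so that $x<y$ iff $I_x$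 lies entirely to the left of $I_y$; $P_1\cap P_2$ is the order whose relation is the intersection of the relations. *)

theory Defs
  imports Complex_Main
begin

text \<open>A bipartite graph (U,V,F) with V a disjoint copy of U is encoded by the set of
pairs (x,y) in U x U, where (x,y) stands for the edge u_x v_y.\<close>

definition partial_order_on_set :: "'a set \<Rightarrow> 'a rel \<Rightarrow> bool" where
  "partial_order_on_set U R \<longleftrightarrow> R \<subseteq> U \<times> U \<and> irrefl_on U R \<and> trans R"

definition linear_order_on_set :: "'a set \<Rightarrow> 'a rel \<Rightarrow> bool" where
  "linear_order_on_set U R \<longleftrightarrow> partial_order_on_set U R \<and> total_on U R"

definition interval_order_on_set :: "'a set \<Rightarrow> 'a rel \<Rightarrow> bool" where
  "interval_order_on_set U R \<longleftrightarrow> partial_order_on_set U R \<and>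
     (\<exists>l r :: 'a \<Rightarrow> real. (\<forall>x\<in>U. l x \<le> r x) \<and>
        (\<forall>x\<in>U. \<forall>y\<in>U. (x, y) \<in> R \<longleftrightarrow> r x < l y))"

definition C_graph :: "'a set \<Rightarrow> 'a rel \<Rightarrow> 'a rel" where
  "C_graph U Q = {(x, y). x \<in> U \<and> y \<in> U \<and> (x, y) \<in> Q}"

definition NC_graph :: "'a set \<Rightarrow> 'a rel \<Rightarrow> 'a rel" where
  "NC_graph U Q = {(x, y). x \<in> U \<and> y \<in> U \<and> ((x, y) \<in> Q \<or> x = y)}"

definition bip_compl :: "'a set \<Rightarrow> 'a rel \<Rightarrow> 'a rel" where
  "bip_compl U F = (U \<times> U) - F"

definition chain_graph :: "'a set \<Rightarrow> 'a rel \<Rightarrow> bool" where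
  "chain_graph U F \<longleftrightarrow> F \<subseteq> U \<times> U \<and>
     (\<forall>x\<in>U. \<forall>x'\<in>U. {y. (x, y) \<in> F} \<subseteq> {y. (x', y) \<in> F} \<or> {y. (x', y) \<in> F} \<subseteq> {y. (x, y) \<in> F}) \<and>
     (\<forall>y\<in>U. \<forall>y'\<in>U. {x. (x, y) \<in> F} \<subseteq> {x. (x, y') \<in> F} \<or> {x. (x, y') \<in> F} \<subseteq> {x. (x, y) \<in> F})"

end

theory Submission
  imports Defs "HOL-Library.Product_Lexorder"
begin

lemma compl_C: "R \<subseteq> U \<times> U \<Longrightarrow> bip_compl U (C_graph U R) = U \<times> U - R"
  unfolding bip_compl_def C_graph_def by auto

lemma compl_NC: "bip_compl U (NC_graph U R) = U \<times> U - R - Id"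
  unfolding bip_compl_def NC_graph_def by auto

lemma interval_rep:
  assumes fin: "finite U" and sub: "R \<subseteq> U \<times> U" and irr: "\<forall>x\<in>U. (x,x) \<notin> R"
    and nest: "\<forall>y\<in>U. \<forall>y'\<in>U. {x. (x,y)\<in>R} \<subseteq> {x. (x,y')\<in>R} \<or> {x. (x,y')\<in>R} \<subseteq> {x. (x,y)\<in>R}"
  shows "\<exists>l r :: 'a \<Rightarrow> real. (\<forall>x\<in>U. l x \<le> r x) \<and>
        (\<forall>x\<in>U. \<forall>y\<in>U. (x, y) \<in> R \<longleftrightarrow> r x < l y)"
proof -
  define pr where "pr y = {x. (x,y)\<in>R}" for y
  have finp: "finite (pr y)" for y
    by (rule finite_subset[OF _ fin]) (use sub in \<open>auto simp: pr_def\<close>)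
  define l where "l y = real (card (pr y))" for y
  define S where "S x = {z\<in>U. (x,z)\<notin>R}" for x
  define r where "r x = real (Max ((\<lambda>z. card (pr z)) ` S x))" for x
  have finS: "finite ((\<lambda>z. card (pr z)) ` S x)" for x using fin by (auto simp: S_def)
  have xS: "x \<in> U \<Longrightarrow> x \<in> S x" for x using irr by (auto simp: S_def)
  have ge: "x \<in> U \<Longrightarrow> z \<in> S x \<Longrightarrow> l z \<le> r x" for x z
    unfolding l_def r_def using finS by (auto intro!: Max_ge)
  have lt: "r x < l y" if "x \<in> U" "y \<in> U" "(x,y) \<in> R" for x y
  proof -
    have "card (pr z) < card (pr y)" if "z \<in> S x" for z
    proof -
      have zU: "z \<in> U" and xz: "(x,z) \<notin> R" using that by (auto simp: S_def)
      have "pr z \<subset> pr y"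
        using nest zU \<open>y\<in>U\<close> xz \<open>(x,y)\<in>R\<close> unfolding pr_def by blast
      thus ?thesis using finp psubset_card_mono by blast
    qed
    hence "Max ((\<lambda>z. card (pr z)) ` S x) < card (pr y)"
      using finS xS[OF \<open>x\<in>U\<close>] by (subst Max_less_iff) auto
    thus ?thesis unfolding r_def l_def by simp
  qed
  show ?thesis
  proof (intro exI conjI ballI)
    fix x assume "x \<in> U" thus "l x \<le> r x" using ge xS by blast
  next
    fix x y assume "x \<in> U" "y \<in> U"
    show "(x, y) \<in> R \<longleftrightarrow> r x < l y"
    proof
      assume "(x,y) \<in> R" thus "r x < l y" using lt \<open>x\<in>U\<close> \<open>y\<in>U\<close> by blast
    next
      assume "r x < l y"
      moreover have "(x,y) \<notin> R \<Longrightarrow> l y \<le> r x" using ge \<open>x\<in>U\<close> \<open>y\<in>U\<close> by (auto simp: S_def)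
      ultimately show "(x,y) \<in> R" by linarith
    qed
  qed
qed

lemma A_to_B:
  assumes "linear_order_on_set U P1" "interval_order_on_set U P2" "P = P1 \<inter> P2"
  shows "partial_order_on_set U P1 \<and> partial_order_on_set U P2 \<and>
             bip_compl U (C_graph U P) = bip_compl U (NC_graph U P1) \<union> bip_compl U (C_graph U P2) \<and>
             chain_graph U (bip_compl U (NC_graph U P1)) \<and> chain_graph U (bip_compl U (C_graph U P2))"
proof -
  have po1: "partial_order_on_set U P1" and tot: "total_on U P1"
    using assms(1) by (auto simp: linear_order_on_set_def)
  have po2: "partial_order_on_set U P2" using assms(2) by (auto simp: interval_order_on_set_def)
  obtain l r :: "'a \<Rightarrow> real" where lr: "\<forall>x\<in>U. \<forall>y\<in>U. (x, y) \<in> P2 \<longleftrightarrow> r x < l y"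
    using assms(2) by (auto simp: interval_order_on_set_def)
  have s1: "P1 \<subseteq> U \<times> U" and i1: "irrefl_on U P1" and t1: "trans P1"
    using po1 by (auto simp: partial_order_on_set_def)
  have s2: "P2 \<subseteq> U \<times> U" and i2: "irrefl_on U P2"
    using po2 by (auto simp: partial_order_on_set_def)
  have eq: "bip_compl U (C_graph U P) = bip_compl U (NC_graph U P1) \<union> bip_compl U (C_graph U P2)"
    unfolding compl_NC using s1 s2 i2 assms(3)
    by (subst compl_C, blast)+ (auto simp: irrefl_on_def)
  have cg1: "chain_graph U (U \<times> U - P1 - Id)"
    unfolding chain_graph_def
  proof (intro conjI ballI)
    show "U \<times> U - P1 - Id \<subseteq> U \<times> U" by blast
  next
    fix x x' assume xU: "x \<in> U" and x'U: "x' \<in> U"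
    show "{y. (x, y) \<in> U \<times> U - P1 - Id} \<subseteq> {y. (x', y) \<in> U \<times> U - P1 - Id} \<or>
          {y. (x', y) \<in> U \<times> U - P1 - Id} \<subseteq> {y. (x, y) \<in> U \<times> U - P1 - Id}"
    proof (cases "x = x'")
      case False
      then have "(x,x') \<in> P1 \<or> (x',x) \<in> P1" using tot xU x'U by (auto simp: total_on_def)
      then show ?thesis using t1 tot i1 xU x'U unfolding total_on_def irrefl_on_def trans_def
        by blast
    qed simp
  next
    fix y y' assume yU: "y \<in> U" and y'U: "y' \<in> U"
    show "{x. (x, y) \<in> U \<times> U - P1 - Id} \<subseteq> {x. (x, y') \<in> U \<times> U - P1 - Id} \<or>
          {x. (x, y') \<in> U \<times> U - P1 - Id} \<subseteq> {x. (x, y) \<in> U \<times> U - P1 - Id}"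
    proof (cases "y = y'")
      case False
      then have "(y,y') \<in> P1 \<or> (y',y) \<in> P1" using tot yU y'U by (auto simp: total_on_def)
      then show ?thesis using t1 tot i1 yU y'U unfolding total_on_def irrefl_on_def trans_def
        by blast
    qed simp
  qed
  have cg2: "chain_graph U (U \<times> U - P2)"
    unfolding chain_graph_def
  proof (intro conjI ballI)
    show "U \<times> U - P2 \<subseteq> U \<times> U" by blast
  next
    fix x x' assume xU: "x \<in> U" and x'U: "x' \<in> U"
    show "{y. (x, y) \<in> U \<times> U - P2} \<subseteq> {y. (x', y) \<in> U \<times> U - P2} \<or>
          {y. (x', y) \<in> U \<times> U - P2} \<subseteq> {y. (x, y) \<in> U \<times> U - P2}"
    proof (cases "r x \<le> r x'")
      case True
      then show ?thesis using lr xU x'U by force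
    next
      case False
      then show ?thesis using lr xU x'U by force
    qed
  next
    fix y y' assume yU: "y \<in> U" and y'U: "y' \<in> U"
    show "{x. (x, y) \<in> U \<times> U - P2} \<subseteq> {x. (x, y') \<in> U \<times> U - P2} \<or>
          {x. (x, y') \<in> U \<times> U - P2} \<subseteq> {x. (x, y) \<in> U \<times> U - P2}"
    proof (cases "l y \<le> l y'")
      case True
      then show ?thesis using lr yU y'U by force
    next
      case False
      then show ?thesis using lr yU y'U by force
    qed
  qed
  show ?thesis using po1 po2 eq cg1 cg2 s2 by (simp add: compl_NC compl_C)
qed


lemma C_to_A:
  assumes fin: "finite U" and po: "partial_order_on_set U P"
    and c1: "chain_graph U E1" and c2: "chain_graph U E2"
    and eqE: "bip_compl U (C_graph U P) = E1 \<union> E2" and dg: "Id_on U \<subseteq> E2 - E1"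
  shows "\<exists>P1 P2. linear_order_on_set U P1 \<and> interval_order_on_set U P2 \<and> P = P1 \<inter> P2"
proof -
  have sP: "P \<subseteq> U \<times> U" and iP: "irrefl_on U P" and tP: "trans P"
    using po by (auto simp: partial_order_on_set_def)
  have cP: "U \<times> U - P = E1 \<union> E2" using eqE compl_C[OF sP] by simp
  have sE1: "E1 \<subseteq> U \<times> U" and rowE1: "\<forall>x\<in>U. \<forall>x'\<in>U. {y. (x, y) \<in> E1} \<subseteq> {y. (x', y) \<in> E1} \<or> {y. (x', y) \<in> E1} \<subseteq> {y. (x, y) \<in> E1}"
    using c1 by (auto simp: chain_graph_def)
  have sE2: "E2 \<subseteq> U \<times> U" and rowE2: "\<forall>x\<in>U. \<forall>x'\<in>U. {y. (x, y) \<in> E2} \<subseteq> {y. (x', y) \<in> E2} \<or> {y. (x', y) \<in> E2} \<subseteq> {y. (x, y) \<in> E2}"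
    and colE2: "\<forall>y\<in>U. \<forall>y'\<in>U. {x. (x, y) \<in> E2} \<subseteq> {x. (x, y') \<in> E2} \<or> {x. (x, y') \<in> E2} \<subseteq> {x. (x, y) \<in> E2}"
    using c2 by (auto simp: chain_graph_def)
  have E1P: "(x,y) \<in> E1 \<Longrightarrow> (x,y) \<notin> P" for x y using cP by blast
  have E2P: "(x,y) \<in> E2 \<Longrightarrow> (x,y) \<notin> P" for x y using cP by blast
  have E1d: "x \<in> U \<Longrightarrow> (x,x) \<notin> E1" for x using dg by auto
  have E2d: "x \<in> U \<Longrightarrow> (x,x) \<in> E2" for x using dg by auto
  define P2 where "P2 = U \<times> U - E2"
  have irr2: "\<forall>x\<in>U. (x,x) \<notin> P2" using E2d by (auto simp: P2_def)
  have tr2: "trans P2"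
  proof (rule transI)
    fix x y z assume xy: "(x,y) \<in> P2" and yz: "(y,z) \<in> P2"
    have U: "x \<in> U" "y \<in> U" "z \<in> U" using xy yz by (auto simp: P2_def)
    have "(x,y) \<notin> E2" "(y,z) \<notin> E2" "(y,y) \<in> E2" using xy yz E2d U by (auto simp: P2_def)
    then have "(x,z) \<notin> E2" using rowE2 U by blast
    then show "(x,z) \<in> P2" using U by (auto simp: P2_def)
  qed
  have po2: "partial_order_on_set U P2"
    using irr2 tr2 by (auto simp: partial_order_on_set_def P2_def irrefl_on_def)
  have nest2: "\<forall>y\<in>U. \<forall>y'\<in>U. {x. (x,y)\<in>P2} \<subseteq> {x. (x,y')\<in>P2} \<or> {x. (x,y')\<in>P2} \<subseteq> {x. (x,y)\<in>P2}"
  proof (intro ballI)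
    fix y y' assume "y \<in> U" "y' \<in> U"
    then have "{x. (x, y) \<in> E2} \<subseteq> {x. (x, y') \<in> E2} \<or> {x. (x, y') \<in> E2} \<subseteq> {x. (x, y) \<in> E2}"
      using colE2 by blast
    then show "{x. (x,y)\<in>P2} \<subseteq> {x. (x,y')\<in>P2} \<or> {x. (x,y')\<in>P2} \<subseteq> {x. (x,y)\<in>P2}"
      using \<open>y \<in> U\<close> \<open>y' \<in> U\<close> unfolding P2_def by blast
  qed
  have int2: "interval_order_on_set U P2"
    unfolding interval_order_on_set_def
    using po2 interval_rep[OF fin _ irr2 nest2] by (auto simp: P2_def)
  define N where "N x = {z. \<exists>w. (w = x \<or> (w,x) \<in> P) \<and> (w,z) \<in> E1}" for x
  define k1 where "k1 x = card (N x)" for x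
  define k2 where "k2 x = card {w. (w,x) \<in> P}" for x
  obtain k3 :: "'a \<Rightarrow> nat" and n where inj3: "inj_on k3 U"
    using finite_imp_inj_to_nat_seg[OF fin] by blast
  define key where "key x = (k1 x, k2 x, k3 x)" for x
  define P1 where "P1 = {(x,y). x \<in> U \<and> y \<in> U \<and> key x < key y}"
  have finN: "finite (N x)" for x
    by (rule finite_subset[OF _ fin]) (use sE1 in \<open>auto simp: N_def\<close>)
  have finpre: "finite {w. (w,x) \<in> P}" for x
    by (rule finite_subset[OF _ fin]) (use sP in \<open>auto\<close>)
  have k1E: "k1 y < k1 x" if "(x,y) \<in> E1" for x y
  proof -
    have U: "x \<in> U" "y \<in> U" using that sE1 by auto
    have bad: "(w,y) \<notin> E1" if "w = y \<or> (w,y) \<in> P" for w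
      using that E1d[OF U(2)] E1P by blast
    have "y \<in> N x" using \<open>(x,y)\<in>E1\<close> by (auto simp: N_def)
    moreover have "y \<notin> N y" using bad by (auto simp: N_def)
    moreover have "N y \<subseteq> N x"
    proof
      fix z assume "z \<in> N y"
      then obtain w where w: "w = y \<or> (w,y) \<in> P" "(w,z) \<in> E1" by (auto simp: N_def)
      have wU: "w \<in> U" using w sP U by auto
      have "(w,y) \<notin> E1" using bad w(1) .
      then have "{v. (w, v) \<in> E1} \<subseteq> {v. (x, v) \<in> E1}"
        using rowE1 wU U \<open>(x,y)\<in>E1\<close> by blast
      then show "z \<in> N x" using w(2) by (auto simp: N_def)
    qed
    ultimately have "N y \<subset> N x" by blast
    then show ?thesis unfolding k1_def using finN psubset_card_mono by blast
  qed
  have keyP: "key x < key y" if "(x,y) \<in> P" for x y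
  proof -
    have "N x \<subseteq> N y" using that tP unfolding N_def trans_def by blast
    then have a: "k1 x \<le> k1 y" unfolding k1_def using finN card_mono by blast
    have xU: "x \<in> U" using that sP by auto
    have "{w. (w,x) \<in> P} \<subset> {w. (w,y) \<in> P}"
      using that tP iP xU unfolding trans_def irrefl_on_def by blast
    then have b: "k2 x < k2 y" unfolding k2_def using finpre psubset_card_mono by blast
    show ?thesis using a b unfolding key_def by (auto simp: less_prod_def)
  qed
  have keyinj: "x \<in> U \<Longrightarrow> y \<in> U \<Longrightarrow> key x = key y \<Longrightarrow> x = y" for x y
    using inj3 unfolding key_def inj_on_def by auto
  have lin1: "linear_order_on_set U P1"
    unfolding linear_order_on_set_def partial_order_on_set_def P1_def
    by (auto simp: irrefl_on_def trans_def total_on_def dest: keyinj)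
  have "P = P1 \<inter> P2"
  proof
    show "P \<subseteq> P1 \<inter> P2"
    proof
      fix p assume "p \<in> P"
      then obtain x y where p: "p = (x,y)" "(x,y) \<in> P" by (cases p) auto
      then have U: "x \<in> U" "y \<in> U" using sP by auto
      show "p \<in> P1 \<inter> P2" using p U keyP E2P by (auto simp: P1_def P2_def)
    qed
  next
    show "P1 \<inter> P2 \<subseteq> P"
    proof
      fix p assume p1: "p \<in> P1 \<inter> P2"
      then obtain x y where p: "p = (x,y)" by (cases p) auto
      have U: "x \<in> U" "y \<in> U" and kk: "key x < key y" and n2: "(x,y) \<notin> E2"
        using p1 p by (auto simp: P1_def P2_def)
      show "p \<in> P"
      proof (rule ccontr)
        assume "p \<notin> P"
        then have "(x,y) \<in> E1" using cP U n2 p by blast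
        then have "k1 y < k1 x" by (rule k1E)
        then show False using kk unfolding key_def by (auto simp: less_prod_def)
      qed
    qed
  qed
  then show ?thesis using lin1 int2 by blast
qed

theorem theorem5:
  fixes U :: "'a set" and P :: "'a rel"
  assumes "finite U" and "partial_order_on_set U P"
  shows "((\<exists>P1 P2. linear_order_on_set U P1 \<and> interval_order_on_set U P2 \<and> P = P1 \<inter> P2)
          \<longleftrightarrow>
          (\<exists>P1 P2. partial_order_on_set U P1 \<and> partial_order_on_set U P2 \<and>
             bip_compl U (C_graph U P) = bip_compl U (NC_graph U P1) \<union> bip_compl U (C_graph U P2) \<and>
             chain_graph U (bip_compl U (NC_graph U P1)) \<and> chain_graph U (bip_compl U (C_graph U P2))))
       \<and>
         ((\<exists>P1 P2. partial_order_on_set U P1 \<and> partial_order_on_set U P2 \<and>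
             bip_compl U (C_graph U P) = bip_compl U (NC_graph U P1) \<union> bip_compl U (C_graph U P2) \<and>
             chain_graph U (bip_compl U (NC_graph U P1)) \<and> chain_graph U (bip_compl U (C_graph U P2)))
          \<longleftrightarrow>
          (\<exists>E1 E2. chain_graph U E1 \<and> chain_graph U E2 \<and>
             bip_compl U (C_graph U P) = E1 \<union> E2 \<and> Id_on U \<subseteq> E2 - E1))"
proof -
  let ?A = "\<exists>P1 P2. linear_order_on_set U P1 \<and> interval_order_on_set U P2 \<and> P = P1 \<inter> P2"
  let ?B = "\<exists>P1 P2. partial_order_on_set U P1 \<and> partial_order_on_set U P2 \<and>
             bip_compl U (C_graph U P) = bip_compl U (NC_graph U P1) \<union> bip_compl U (C_graph U P2) \<and>
             chain_graph U (bip_compl U (NC_graph U P1)) \<and> chain_graph U (bip_compl U (C_graph U P2))"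
  let ?C = "\<exists>E1 E2. chain_graph U E1 \<and> chain_graph U E2 \<and>
             bip_compl U (C_graph U P) = E1 \<union> E2 \<and> Id_on U \<subseteq> E2 - E1"
  have AB: "?A \<Longrightarrow> ?B" using A_to_B by blast
  have BC: "?B \<Longrightarrow> ?C"
  proof -
    assume ?B
    then obtain P1 P2 where h: "partial_order_on_set U P1" "partial_order_on_set U P2"
      "bip_compl U (C_graph U P) = bip_compl U (NC_graph U P1) \<union> bip_compl U (C_graph U P2)"
      "chain_graph U (bip_compl U (NC_graph U P1))" "chain_graph U (bip_compl U (C_graph U P2))"
      by blast
    have "Id_on U \<subseteq> bip_compl U (C_graph U P2) - bip_compl U (NC_graph U P1)"
      using h(2) by (auto simp: bip_compl_def C_graph_def NC_graph_def partial_order_on_set_def irrefl_on_def)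
    then show ?C using h by blast
  qed
  have CA: "?C \<Longrightarrow> ?A" using C_to_A[OF assms] by blast
  show ?thesis using AB BC CA by blast
qed

end
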